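(* Let $\mathtt Q$ be a probability measure and $(M_t)_{t\in\mathbb N_0}$ a nonnegative $\mathtt Q$-martingale with $\mathtt E_{\mathtt Q}[M_0]=1$. Let $Y_t:=M_t/M_{t-1}$ for $t\in\mathbb N$ (with $0/0:=1$) and $Y_0:=M_0$. Assume $\mathtt Q(\sum_{t\in\mathbb N}(Y_t-1)^2=\infty)=1$. Then $M_\infty:=\lim_tM_t=0$ $\mathtt Q$-a.s. Fix $\varepsilon>0$ and assume further that for each $t\in\mathbb N_0$ and each $\mathcal F_{t-1}$-measurable random variable $\beta>1$ (with $\mathcal F_{-1}:=\{\emptyset,\Omega\}$), $\mathtt E_{\mathtt Q}[Y_t\mathbf 1\{Y_t\ge\beta\}\mid\mathcal F_{t-1}]\le\beta(1+\varepsilon)\,\mathtt Q(Y_t\ge\beta\mid\mathcal F_{t-1})$ a.s. Then for every $\alpha\in(0,1]$, $\alpha\ \ge\ \mathtt Q(\sup_{t\in\mathbb N_0}M_t\ge1/\alpha)\ \ge\ \alpha/(1+\varepsilon).$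
   Context: Filtration $\mathcal F_0=\sigma(U)$, $\mathcal F_t=\sigma(U,X_1,\dots,X_t)$ generated by an independent uniform $U$ and observations $(X_t)$. *)

theory Defs
  imports "HOL-Probability.Probability"
begin

definition is_filtration :: "'a measure \<Rightarrow> (nat \<Rightarrow> 'a measure) \<Rightarrow> bool" where
  "is_filtration M F \<longleftrightarrow> (\<forall>t. subalgebra M (F t)) \<and> (\<forall>s t. s \<le> t \<longrightarrow> sets (F s) \<subseteq> sets (F t))"

definition prev_alg :: "'a measure \<Rightarrow> (nat \<Rightarrow> 'a measure) \<Rightarrow> nat \<Rightarrow> 'a measure" where
  "prev_alg M F t = (if t = 0 then sigma (space M) {} else F (t - 1))"

definition is_martingale :: "'a measure \<Rightarrow> (nat \<Rightarrow> 'a measure) \<Rightarrow> (nat \<Rightarrow> 'a \<Rightarrow> real) \<Rightarrow> bool" where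
  "is_martingale M F X \<longleftrightarrow>
     (\<forall>t. X t \<in> borel_measurable (F t)) \<and> (\<forall>t. integrable M (X t)) \<and>
     (\<forall>t. AE \<omega> in M. real_cond_exp M (F t) (X (Suc t)) \<omega> = X t \<omega>)"

definition ratio :: "(nat \<Rightarrow> 'a \<Rightarrow> real) \<Rightarrow> nat \<Rightarrow> 'a \<Rightarrow> real" where
  "ratio X t \<omega> = (if t = 0 then X 0 \<omega>
      else if X (t - 1) \<omega> = 0 \<and> X t \<omega> = 0 then 1 else X t \<omega> / X (t - 1) \<omega>)"

end

theory Submission imports Defs begin


lemma det:
  fixes M :: "nat \<Rightarrow> real"
  assumes d: "\<delta> > 0" and Md: "\<And>t. M t \<ge> \<delta>"
    and fin: "(\<Sum>t. ennreal ((sqrt (M (Suc t)) - sqrt (M t))\<^sup>2 / sqrt (M t))) \<noteq> \<top>"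
  shows "(\<Sum>t. ennreal ((M (Suc t) / M t - 1)\<^sup>2)) \<noteq> \<top>"
proof -
  define a where "a t = (sqrt (M (Suc t)) - sqrt (M t))\<^sup>2 / sqrt (M t)" for t
  define u where "u t = sqrt (M (Suc t) / M t)" for t
  have pos: "M t > 0" for t using d Md[of t] by linarith
  have a0: "a t \<ge> 0" for t unfolding a_def using pos[of t] by simp
  have sa: "summable a" using summable_suminf_not_top[of a] a0 fin unfolding a_def by blast
  have b: "(u t - 1)\<^sup>2 = a t / sqrt (M t)" for t
  proof -
    have sM: "sqrt (M t) > 0" using pos[of t] by simp
    have "u t = sqrt (M (Suc t)) / sqrt (M t)" unfolding u_def by (simp add: real_sqrt_divide)
    then have "u t - 1 = (sqrt (M (Suc t)) - sqrt (M t)) / sqrt (M t)" using sM by (simp add: field_simps)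
    then have "(u t - 1)\<^sup>2 = (sqrt (M (Suc t)) - sqrt (M t))\<^sup>2 / (sqrt (M t))\<^sup>2" by (simp add: power_divide)
    also have "\<dots> = a t / sqrt (M t)" unfolding a_def using sM by (simp add: power2_eq_square)
    finally show ?thesis .
  qed
  have sb: "summable (\<lambda>t. (u t - 1)\<^sup>2)"
  proof (rule summable_comparison_test[OF _ summable_mult[OF sa, of "1 / sqrt \<delta>"]])
    show "\<exists>N. \<forall>n\<ge>N. norm ((u n - 1)\<^sup>2) \<le> 1 / sqrt \<delta> * a n"
    proof (intro exI allI impI)
      fix n
      have "sqrt \<delta> \<le> sqrt (M n)" using Md[of n] by simp
      then have "a n / sqrt (M n) \<le> a n / sqrt \<delta>" using d a0[of n] by (intro divide_left_mono) auto
      moreover have "norm ((u n - 1)\<^sup>2) = a n / sqrt (M n)" unfolding b[of n, symmetric] by simp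
      moreover have "a n / sqrt \<delta> = 1 / sqrt \<delta> * a n" by simp
      ultimately show "norm ((u n - 1)\<^sup>2) \<le> 1 / sqrt \<delta> * a n" by linarith
    qed
  qed
  have "(\<lambda>t. (u t - 1)\<^sup>2) \<longlonglongrightarrow> 0" using summable_LIMSEQ_zero[OF sb] .
  then have ev: "eventually (\<lambda>t. (u t - 1)\<^sup>2 < 1) sequentially"
    using order_tendstoD(2)[OF _ zero_less_one] by blast
  have sc: "summable (\<lambda>t. (M (Suc t) / M t - 1)\<^sup>2)"
  proof (rule summable_comparison_test_ev[OF _ summable_mult[OF sb, of 9]])
    show "eventually (\<lambda>t. norm ((M (Suc t) / M t - 1)\<^sup>2) \<le> 9 * (u t - 1)\<^sup>2) sequentially"
      using ev
    proof eventually_elim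
      case (elim t)
      have u0: "u t \<ge> 0" unfolding u_def using pos[of t] pos[of "Suc t"] by simp
      have uu: "u t * u t = M (Suc t) / M t" unfolding u_def using pos[of t] pos[of "Suc t"] by simp
      have "\<bar>u t - 1\<bar> < 1" using elim by (simp add: abs_square_less_1)
      then have u2: "u t + 1 \<le> 3" by linarith
      have "(M (Suc t) / M t - 1)\<^sup>2 = (u t - 1)\<^sup>2 * (u t + 1)\<^sup>2" unfolding uu[symmetric]
        by (simp add: power2_eq_square algebra_simps)
      also have "\<dots> \<le> (u t - 1)\<^sup>2 * 9"
      proof (rule mult_left_mono)
        have "(u t + 1) * (u t + 1) \<le> 3 * 3" using u0 u2 by (intro mult_mono) auto
        then show "(u t + 1)\<^sup>2 \<le> 9" by (simp add: power2_eq_square)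
      qed simp
      finally show ?case by (simp add: mult.commute)
    qed
  qed
  have "(\<Sum>t. ennreal ((M (Suc t) / M t - 1)\<^sup>2)) = ennreal (\<Sum>t. (M (Suc t) / M t - 1)\<^sup>2)"
    by (rule suminf_ennreal2[OF _ sc]) simp
  then show ?thesis by (simp only: ennreal_neq_top not_False_eq_True)
qed

lemma key_ineq:
  assumes sfs: "sigma_finite_subalgebra Q G"
    and ae: "AE \<omega> in Q. nn_cond_exp Q G f1 \<omega> \<le> c \<omega> * nn_cond_exp Q G f2 \<omega>"
    and [measurable]: "h \<in> borel_measurable G" "c \<in> borel_measurable G" "f1 \<in> borel_measurable Q" "f2 \<in> borel_measurable Q"
  shows "(\<integral>\<^sup>+\<omega>. h \<omega> * f1 \<omega> \<partial>Q) \<le> (\<integral>\<^sup>+\<omega>. (h \<omega> * c \<omega>) * f2 \<omega> \<partial>Q)"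
proof -
  interpret sigma_finite_subalgebra Q G by (rule sfs)
  have "(\<integral>\<^sup>+\<omega>. h \<omega> * f1 \<omega> \<partial>Q) = (\<integral>\<^sup>+\<omega>. h \<omega> * nn_cond_exp Q G f1 \<omega> \<partial>Q)"
    by (rule nn_cond_exp_intg[symmetric]) measurable
  also have "\<dots> \<le> (\<integral>\<^sup>+\<omega>. h \<omega> * (c \<omega> * nn_cond_exp Q G f2 \<omega>) \<partial>Q)"
    by (rule nn_integral_mono_AE) (use ae in \<open>eventually_elim, auto intro: mult_left_mono\<close>)
  also have "\<dots> = (\<integral>\<^sup>+\<omega>. (h \<omega> * c \<omega>) * nn_cond_exp Q G f2 \<omega> \<partial>Q)" by (simp add: mult.assoc)
  also have "\<dots> = (\<integral>\<^sup>+\<omega>. (h \<omega> * c \<omega>) * f2 \<omega> \<partial>Q)"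
    by (rule nn_cond_exp_intg) measurable
  finally show ?thesis .
qed

locale nnmart = prob_space Q for Q :: "'a measure" +
  fixes F :: "nat \<Rightarrow> 'a measure" and X :: "nat \<Rightarrow> 'a \<Rightarrow> real"
  assumes filt: "is_filtration Q F" and mart: "is_martingale Q F X"
    and nonneg: "\<And>t \<omega>. \<omega> \<in> space Q \<Longrightarrow> X t \<omega> \<ge> 0"
begin

lemma sub: "subalgebra Q (F t)" using filt unfolding is_filtration_def by auto
lemma space_F[simp]: "space (F t) = space Q" using sub[of t] unfolding subalgebra_def by auto
lemma sets_F_mono: "s \<le> t \<Longrightarrow> sets (F s) \<subseteq> sets (F t)" using filt unfolding is_filtration_def by auto
lemma sets_F_Q: "A \<in> sets (F t) \<Longrightarrow> A \<in> sets Q" using sub[of t] unfolding subalgebra_def by auto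
lemma sfs: "sigma_finite_subalgebra Q (F t)"
  by (rule finite_measure_subalgebra_is_sigma_finite) (simp add: finite_measure_subalgebra_def finite_measure_subalgebra_axioms_def sub finite_measure_axioms)

lemma meas_F: "X t \<in> borel_measurable (F t)" using mart unfolding is_martingale_def by auto
lemma meas_le: "s \<le> t \<Longrightarrow> X s \<in> borel_measurable (F t)"
  by (rule measurable_from_subalg[of "F t" "F s"]) (auto simp: subalgebra_def sets_F_mono meas_F)
lemma F_mono_meas: "s \<le> t \<Longrightarrow> f \<in> measurable (F s) N \<Longrightarrow> f \<in> measurable (F t) N"
  by (rule measurable_from_subalg[of "F t" "F s"]) (auto simp: subalgebra_def sets_F_mono)
lemma F_Q_meas: "f \<in> measurable (F t) N \<Longrightarrow> f \<in> measurable Q N"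
  by (rule measurable_from_subalg[OF sub])
lemma measQ[measurable]: "X t \<in> borel_measurable Q" using F_Q_meas[OF meas_F] .
lemma integ[simp]: "integrable Q (X t)" using mart unfolding is_martingale_def by auto

lemma step:
  assumes g: "g \<in> borel_measurable (F t)" and B: "\<And>x. x \<in> space Q \<Longrightarrow> \<bar>g x\<bar> \<le> B"
  shows "(\<integral>x. g x * X (Suc t) x \<partial>Q) = (\<integral>x. g x * X t x \<partial>Q)"
proof -
  interpret s: sigma_finite_subalgebra Q "F t" by (rule sfs)
  have gQ[measurable]: "g \<in> borel_measurable Q" using F_Q_meas[OF g] .
  have int: "integrable Q (\<lambda>x. g x * X (Suc t) x)"
    by (rule Bochner_Integration.integrable_bound[where f="\<lambda>x. B * \<bar>X (Suc t) x\<bar>"]) (auto intro!: mult_right_mono AE_I2 order_trans[OF B] simp: abs_mult)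
  have "(\<integral>x. g x * X (Suc t) x \<partial>Q) = (\<integral>x. g x * real_cond_exp Q (F t) (X (Suc t)) x \<partial>Q)"
    using s.real_cond_exp_intg(2)[OF int g measQ] by simp
  also have "\<dots> = (\<integral>x. g x * X t x \<partial>Q)"
    apply (rule integral_cong_AE)
    using mart unfolding is_martingale_def by (auto simp: gQ elim!: AE_mp[OF _ AE_I2] allE[of _ t])
  finally show ?thesis .
qed

lemma step_n:
  assumes "k \<le> n" and g: "g \<in> borel_measurable (F k)" and B: "\<And>x. x \<in> space Q \<Longrightarrow> \<bar>g x\<bar> \<le> B"
  shows "(\<integral>x. g x * X n x \<partial>Q) = (\<integral>x. g x * X k x \<partial>Q)"
  using assms(1)
proof (induction n)
  case 0 then show ?case by simp
next
  case (Suc n)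
  show ?case
  proof (cases "k = Suc n")
    case False
    then have "k \<le> n" using Suc by simp
    have "(\<integral>x. g x * X (Suc n) x \<partial>Q) = (\<integral>x. g x * X n x \<partial>Q)"
      by (rule step[OF F_mono_meas[OF \<open>k \<le> n\<close> g] B])
    then show ?thesis using Suc.IH[OF \<open>k \<le> n\<close>] by simp
  qed simp
qed

lemma step_set:
  assumes "k \<le> n" "A \<in> sets (F k)"
  shows "(\<integral>x. indicator A x * X n x \<partial>Q) = (\<integral>x. indicator A x * X k x \<partial>Q)"
  by (rule step_n[OF assms(1), where B=1]) (use assms(2) in auto)


lemma setF: "{\<omega> \<in> space Q. P (X j \<omega>)} \<in> sets (F j)" if "Measurable.pred borel P"
proof -
  have "{\<omega> \<in> space (F j). P (X j \<omega>)} \<in> sets (F j)"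
    using measurable_compose[OF meas_F that] by (simp add: pred_def)
  then show ?thesis by simp
qed

lemma setQ: "A \<in> sets Q \<Longrightarrow> Measurable.pred borel P \<Longrightarrow> A \<inter> {\<omega> \<in> space Q. P (X j \<omega>)} \<in> sets Q"
  using setF[of P j] sets_F_Q by blast

lemma int_ind[simp]: "A \<in> sets Q \<Longrightarrow> integrable Q (\<lambda>x. indicator A x * X k x)"
  by (subst mult.commute) (rule integrable_real_mult_indicator[OF _ integ])

lemma int_cind[simp]: "A \<in> sets Q \<Longrightarrow> integrable Q (\<lambda>x. c * indicator A x :: real)"
  by (intro integrable_mult_right integrable_real_indicator) (auto simp: emeasure_eq_measure)

lemma lower1:
  assumes "A \<in> sets Q" "c \<ge> 0"
  shows "c * measure Q (A \<inter> {\<omega> \<in> space Q. X k \<omega> \<ge> c}) \<le> (\<integral>x. indicator (A \<inter> {\<omega> \<in> space Q. X k \<omega> \<ge> c}) x * X k x \<partial>Q)"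
proof -
  let ?B = "A \<inter> {\<omega> \<in> space Q. X k \<omega> \<ge> c}"
  have B: "?B \<in> sets Q" using assms by measurable
  have "c * measure Q ?B = (\<integral>x. c * indicator ?B x \<partial>Q)" using B by simp
  also have "\<dots> \<le> (\<integral>x. indicator ?B x * X k x \<partial>Q)"
    by (rule integral_mono) (use B int_ind[OF B] int_cind[OF B] in \<open>auto simp: indicator_def\<close>)
  finally show ?thesis .
qed

lemma maximal:
  assumes "G \<in> sets (F j)" "c > 0"
  shows "c * measure Q (G \<inter> {\<omega> \<in> space Q. \<exists>k. j \<le> k \<and> k \<le> j + d \<and> X k \<omega> \<ge> c}) \<le> (\<integral>x. indicator G x * X j x \<partial>Q)"
  using assms(1)
proof (induction d arbitrary: j G)
  case 0
  have GQ: "G \<in> sets Q" using sets_F_Q[OF 0] .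
  have eq: "G \<inter> {\<omega> \<in> space Q. \<exists>k. j \<le> k \<and> k \<le> j + 0 \<and> X k \<omega> \<ge> c} = G \<inter> {\<omega> \<in> space Q. X j \<omega> \<ge> c}"
    by auto
  have "(\<integral>x. indicator (G \<inter> {\<omega> \<in> space Q. X j \<omega> \<ge> c}) x * X j x \<partial>Q) \<le> (\<integral>x. indicator G x * X j x \<partial>Q)"
    apply (rule integral_mono)
    apply (rule int_ind, rule setQ[OF GQ], simp)
    apply (rule int_ind, rule GQ)
    by (auto simp: indicator_def nonneg)
  then show ?case using lower1[OF GQ, of c j] assms(2) eq by simp
next
  case (Suc d)
  have GQ: "G \<in> sets Q" using sets_F_Q[OF Suc.prems] .
  define G1 where "G1 = G \<inter> {\<omega> \<in> space Q. X j \<omega> \<ge> c}"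
  define G2 where "G2 = G \<inter> {\<omega> \<in> space Q. X j \<omega> < c}"
  have G2Fj: "G2 \<in> sets (F j)" unfolding G2_def using Suc.prems setF[of "\<lambda>x. x < c" j] by auto
  have G2F: "G2 \<in> sets (F (Suc j))" using G2Fj sets_F_mono[of j "Suc j"] by auto
  have G1Q: "G1 \<in> sets Q" unfolding G1_def by (rule setQ[OF GQ]) simp
  have G2Q: "G2 \<in> sets Q" using sets_F_Q[OF G2F] .
  let ?S = "G \<inter> {\<omega> \<in> space Q. \<exists>k. j \<le> k \<and> k \<le> j + Suc d \<and> X k \<omega> \<ge> c}"
  let ?S2 = "G2 \<inter> {\<omega> \<in> space Q. \<exists>k. Suc j \<le> k \<and> k \<le> Suc j + d \<and> X k \<omega> \<ge> c}"
  have sub: "?S \<subseteq> G1 \<union> ?S2"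
  proof
    fix \<omega> assume "\<omega> \<in> ?S"
    then obtain k where k: "\<omega> \<in> G" "\<omega> \<in> space Q" "j \<le> k" "k \<le> j + Suc d" "X k \<omega> \<ge> c" by auto
    show "\<omega> \<in> G1 \<union> ?S2"
    proof (cases "X j \<omega> \<ge> c")
      case True then show ?thesis using k unfolding G1_def by auto
    next
      case False
      then have "k \<noteq> j" using k by auto
      then show ?thesis using k False unfolding G2_def by auto
    qed
  qed
  have "{\<omega> \<in> space Q. \<exists>k. Suc j \<le> k \<and> k \<le> Suc j + d \<and> X k \<omega> \<ge> c} \<in> sets Q" by measurable
  then have S2Q: "?S2 \<in> sets Q" using G2Q by blast
  have "measure Q ?S \<le> measure Q (G1 \<union> ?S2)"
    by (rule finite_measure_mono[OF sub]) (use G1Q S2Q in auto)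
  also have "\<dots> \<le> measure Q G1 + measure Q ?S2"
    by (rule measure_Un_le) (use G1Q S2Q in auto)
  finally have m0: "measure Q ?S \<le> measure Q G1 + measure Q ?S2" .
  have m: "c * measure Q ?S \<le> c * measure Q G1 + c * measure Q ?S2"
    using mult_left_mono[OF m0, of c] assms(2) by (simp add: distrib_left)
  have i1: "c * measure Q G1 \<le> (\<integral>x. indicator G1 x * X j x \<partial>Q)"
    using lower1[OF GQ, of c j] assms(2) unfolding G1_def by simp
  have i2: "c * measure Q ?S2 \<le> (\<integral>x. indicator G2 x * X j x \<partial>Q)"
    using Suc.IH[OF G2F] step_set[of j "Suc j" G2] G2Fj by simp
  have "(\<integral>x. indicator G1 x * X j x \<partial>Q) + (\<integral>x. indicator G2 x * X j x \<partial>Q)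
      = (\<integral>x. indicator G1 x * X j x + indicator G2 x * X j x \<partial>Q)"
    by (rule Bochner_Integration.integral_add[symmetric]) (use G1Q G2Q in auto)
  also have "\<dots> = (\<integral>x. indicator G x * X j x \<partial>Q)"
    by (rule Bochner_Integration.integral_cong) (auto simp: G1_def G2_def indicator_def)
  finally show ?case using m i1 i2 by linarith
qed


lemma norise:
  assumes "G \<in> sets (F j)" "c > 0" "\<delta> \<ge> 0"
  shows "c * measure Q (G \<inter> {\<omega> \<in> space Q. \<exists>i k. j \<le> i \<and> i \<le> k \<and> k \<le> j + d \<and> X i \<omega> < \<delta> \<and> X k \<omega> \<ge> c}) \<le> \<delta> * measure Q G"
  using assms(1)
proof (induction d arbitrary: j G)
  case (0 j G)
  have GQ: "G \<in> sets Q" using sets_F_Q[OF 0] .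
  define G2 where "G2 = G \<inter> {\<omega> \<in> space Q. X j \<omega> < \<delta>}"
  have G2F: "G2 \<in> sets (F j)" unfolding G2_def using 0 setF[of "\<lambda>x. x < \<delta>" j] by auto
  have G2Q: "G2 \<in> sets Q" using sets_F_Q[OF G2F] .
  let ?S = "G \<inter> {\<omega> \<in> space Q. \<exists>i k. j \<le> i \<and> i \<le> k \<and> k \<le> j + 0 \<and> X i \<omega> < \<delta> \<and> X k \<omega> \<ge> c}"
  let ?E = "G2 \<inter> {\<omega> \<in> space Q. \<exists>k. j \<le> k \<and> k \<le> j + 0 \<and> X k \<omega> \<ge> c}"
  have "?S \<subseteq> ?E"
  proof
    fix \<omega> assume "\<omega> \<in> ?S"
    then obtain i k where k: "\<omega> \<in> G" "\<omega> \<in> space Q" "j \<le> i" "i \<le> k" "k \<le> j" "X i \<omega> < \<delta>" "X k \<omega> \<ge> c" by auto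
    then have "i = j" "k = j" by auto
    then show "\<omega> \<in> ?E" using k(1,2) k(6)[unfolded \<open>i=j\<close>] k(7)[unfolded \<open>k=j\<close>] unfolding G2_def by auto
  qed
  have "{\<omega> \<in> space Q. \<exists>k. j \<le> k \<and> k \<le> j + 0 \<and> X k \<omega> \<ge> c} \<in> sets Q" by measurable
  then have EQ: "?E \<in> sets Q" using G2Q by blast
  have "c * measure Q ?S \<le> c * measure Q ?E"
    using finite_measure_mono[OF \<open>?S \<subseteq> ?E\<close> EQ] assms(2) by simp
  also have "\<dots> \<le> (\<integral>x. indicator G2 x * X j x \<partial>Q)" by (rule maximal[OF G2F assms(2)])
  also have "\<dots> \<le> (\<integral>x. \<delta> * indicator G2 x \<partial>Q)"
    by (rule integral_mono) (use G2Q int_ind[OF G2Q] int_cind[OF G2Q] in \<open>auto simp: G2_def indicator_def\<close>)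
  also have "\<dots> = \<delta> * measure Q G2" using G2Q by simp
  also have "\<dots> \<le> \<delta> * measure Q G"
    using finite_measure_mono[of G2 G] GQ assms(3) unfolding G2_def by (auto intro: mult_left_mono)
  finally show ?case .
next
  case (Suc d j G)
  have GQ: "G \<in> sets Q" using sets_F_Q[OF Suc.prems] .
  define G1 where "G1 = G \<inter> {\<omega> \<in> space Q. X j \<omega> \<ge> \<delta>}"
  define G2 where "G2 = G \<inter> {\<omega> \<in> space Q. X j \<omega> < \<delta>}"
  have G2F: "G2 \<in> sets (F j)" unfolding G2_def using Suc.prems setF[of "\<lambda>x. x < \<delta>" j] by auto
  have G2Q: "G2 \<in> sets Q" using sets_F_Q[OF G2F] .
  have G1Fj: "G1 \<in> sets (F j)" unfolding G1_def using Suc.prems setF[of "\<lambda>x. x \<ge> \<delta>" j] by auto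
  have G1F: "G1 \<in> sets (F (Suc j))" using G1Fj sets_F_mono[of j "Suc j"] by auto
  have G1Q: "G1 \<in> sets Q" using sets_F_Q[OF G1Fj] .
  let ?S = "G \<inter> {\<omega> \<in> space Q. \<exists>i k. j \<le> i \<and> i \<le> k \<and> k \<le> j + Suc d \<and> X i \<omega> < \<delta> \<and> X k \<omega> \<ge> c}"
  let ?E = "G2 \<inter> {\<omega> \<in> space Q. \<exists>k. j \<le> k \<and> k \<le> j + Suc d \<and> X k \<omega> \<ge> c}"
  let ?H = "G1 \<inter> {\<omega> \<in> space Q. \<exists>i k. Suc j \<le> i \<and> i \<le> k \<and> k \<le> Suc j + d \<and> X i \<omega> < \<delta> \<and> X k \<omega> \<ge> c}"
  have sub: "?S \<subseteq> ?E \<union> ?H"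
  proof
    fix \<omega> assume "\<omega> \<in> ?S"
    then obtain i k where k: "\<omega> \<in> G" "\<omega> \<in> space Q" "j \<le> i" "i \<le> k" "k \<le> j + Suc d" "X i \<omega> < \<delta>" "X k \<omega> \<ge> c" by auto
    show "\<omega> \<in> ?E \<union> ?H"
    proof (cases "X j \<omega> < \<delta>")
      case True then show ?thesis using k unfolding G2_def by auto
    next
      case False
      then have "i \<noteq> j" using k by auto
      then show ?thesis using k False unfolding G1_def by auto
    qed
  qed
  have "{\<omega> \<in> space Q. \<exists>k. j \<le> k \<and> k \<le> j + Suc d \<and> X k \<omega> \<ge> c} \<in> sets Q" by measurable
  then have EQ: "?E \<in> sets Q" using G2Q by blast
  have "{\<omega> \<in> space Q. \<exists>i k. Suc j \<le> i \<and> i \<le> k \<and> k \<le> Suc j + d \<and> X i \<omega> < \<delta> \<and> X k \<omega> \<ge> c} \<in> sets Q" by measurable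
  then have HQ: "?H \<in> sets Q" using G1Q by blast
  have "measure Q ?S \<le> measure Q (?E \<union> ?H)"
    by (rule finite_measure_mono[OF sub]) (use EQ HQ in auto)
  also have "\<dots> \<le> measure Q ?E + measure Q ?H"
    by (rule measure_Un_le) (use EQ HQ in auto)
  finally have m0: "measure Q ?S \<le> measure Q ?E + measure Q ?H" .
  have m: "c * measure Q ?S \<le> c * measure Q ?E + c * measure Q ?H"
    using mult_left_mono[OF m0, of c] assms(2) by (simp add: distrib_left)
  have "c * measure Q ?E \<le> (\<integral>x. indicator G2 x * X j x \<partial>Q)" by (rule maximal[OF G2F assms(2)])
  also have "\<dots> \<le> (\<integral>x. \<delta> * indicator G2 x \<partial>Q)"
    by (rule integral_mono) (use G2Q int_ind[OF G2Q] int_cind[OF G2Q] in \<open>auto simp: G2_def indicator_def\<close>)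
  also have "\<dots> = \<delta> * measure Q G2" using G2Q by simp
  finally have i1: "c * measure Q ?E \<le> \<delta> * measure Q G2" .
  have i2: "c * measure Q ?H \<le> \<delta> * measure Q G1" using Suc.IH[OF G1F] by simp
  have "measure Q G = measure Q (G1 \<union> G2)" using sets.sets_into_space[OF GQ] by (intro arg_cong[where f="measure Q"]) (auto simp: G1_def G2_def)
  also have "\<dots> = measure Q G1 + measure Q G2" by (rule finite_measure_Union[OF G1Q G2Q]) (auto simp: G1_def G2_def)
  finally show ?case using m i1 i2 by (simp add: distrib_left)
qed

lemma lim_bound:
  assumes "\<And>d. c * measure Q (A d) \<le> B" "incseq A" "\<And>d. A d \<in> sets Q"
  shows "c * measure Q (\<Union>d. A d) \<le> B"
proof -
  have "(\<lambda>d. c * measure Q (A d)) \<longlonglongrightarrow> c * measure Q (\<Union>d. A d)"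
    by (intro tendsto_mult_left finite_Lim_measure_incseq) (use assms in auto)
  then show ?thesis by (rule LIMSEQ_le_const2) (use assms in auto)
qed

lemma norise_all:
  assumes "c > 0" "\<delta> \<ge> 0"
  shows "c * measure Q {\<omega> \<in> space Q. \<exists>i k. i \<le> k \<and> X i \<omega> < \<delta> \<and> X k \<omega> \<ge> c} \<le> \<delta>"
proof -
  let ?A = "\<lambda>d. space Q \<inter> {\<omega> \<in> space Q. \<exists>i k. 0 \<le> i \<and> i \<le> k \<and> k \<le> 0 + d \<and> X i \<omega> < \<delta> \<and> X k \<omega> \<ge> c}"
  have "space Q \<in> sets (F 0)" by (metis sets.top space_F)
  then have b: "c * measure Q (?A d) \<le> \<delta>" for d
    using norise[of "space Q" 0 c \<delta> d] assms prob_space by simp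
  have "c * measure Q (\<Union>d. ?A d) \<le> \<delta>"
    by (rule lim_bound[OF b]) (auto simp: incseq_def, meson order_trans)
  moreover have "(\<Union>d. ?A d) = {\<omega> \<in> space Q. \<exists>i k. i \<le> k \<and> X i \<omega> < \<delta> \<and> X k \<omega> \<ge> c}" by auto
  ultimately show ?thesis by simp
qed

lemma ville_all:
  assumes "c > 0" "expectation (X 0) = 1"
  shows "c * measure Q {\<omega> \<in> space Q. \<exists>k. X k \<omega> \<ge> c} \<le> 1"
proof -
  let ?A = "\<lambda>d. space Q \<inter> {\<omega> \<in> space Q. \<exists>k. 0 \<le> k \<and> k \<le> 0 + d \<and> X k \<omega> \<ge> c}"
  have "space Q \<in> sets (F 0)" by (metis sets.top space_F)
  then have b: "c * measure Q (?A d) \<le> 1" for d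
  proof -
    have "(\<integral>x. indicator (space Q) x * X 0 x \<partial>Q) = expectation (X 0)"
      by (rule Bochner_Integration.integral_cong) auto
    then show ?thesis using maximal[of "space Q" 0 c d] assms \<open>space Q \<in> sets (F 0)\<close> by simp
  qed
  have "c * measure Q (\<Union>d. ?A d) \<le> 1"
    by (rule lim_bound[OF b]) (auto simp: incseq_def, meson order_trans)
  moreover have "(\<Union>d. ?A d) = {\<omega> \<in> space Q. \<exists>k. X k \<omega> \<ge> c}" by auto
  ultimately show ?thesis by simp
qed


lemma Iset_F: "{\<omega> \<in> space Q. \<forall>s\<le>t. P (X s \<omega>)} \<in> sets (F t)" if "Measurable.pred borel P"
proof -
  have "{\<omega> \<in> space Q. \<forall>s\<le>t. P (X s \<omega>)} = (\<Inter>s\<in>{..t}. {\<omega> \<in> space Q. P (X s \<omega>)})" by auto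
  also have "\<dots> \<in> sets (F t)"
  proof (rule sets.finite_INT)
    fix s assume "s \<in> {..t}"
    then show "{\<omega> \<in> space Q. P (X s \<omega>)} \<in> sets (F t)" using setF[OF that, of s] sets_F_mono[of s t] by auto
  qed auto
  finally show ?thesis .
qed

lemma telescope:
  fixes s :: "nat \<Rightarrow> real"
  assumes "\<And>t. s t \<ge> 0"
  shows "(\<Sum>t<n. if (\<forall>u\<le>t. P u) then s t - s (Suc t) else 0) + (if (\<forall>u<n. P u) then s n else 0) \<le> s 0"
proof (induction n)
  case 0 then show ?case by simp
next
  case (Suc n)
  show ?case
  proof (cases "\<forall>u<n. P u")
    case True
    show ?thesis
    proof (cases "P n")
      case True
      then have "\<forall>u\<le>n. P u" using \<open>\<forall>u<n. P u\<close> by (metis le_neq_implies_less)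
      moreover have "\<forall>u<Suc n. P u" using True \<open>\<forall>u<n. P u\<close> less_Suc_eq by auto
      then show ?thesis using Suc \<open>\<forall>u<n. P u\<close> by simp
    next
      case False
      then have "\<not> (\<forall>u\<le>n. P u)" "\<not> (\<forall>u<Suc n. P u)" by auto
      then show ?thesis using Suc \<open>\<forall>u<n. P u\<close> assms[of n] assms[of "Suc n"] by simp
    qed
  next
    case False
    have h1: "\<not> (\<forall>u\<le>n. P u)" "\<not> (\<forall>u<Suc n. P u)" using False by (auto dest: less_imp_le less_SucI)
    show ?thesis using Suc.IH unfolding sum.lessThan_Suc if_not_P[OF h1(1)] if_not_P[OF h1(2)] if_not_P[OF False] by simp
  qed
qed

lemma sqrt_le_1_plus: "x \<ge> 0 \<Longrightarrow> sqrt x \<le> 1 + x"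
proof -
  assume x: "x \<ge> 0"
  have "0 \<le> (sqrt x - 1)^2" by simp
  also have "\<dots> = x - 2 * sqrt x + 1" using x by (simp add: power2_diff)
  finally show "sqrt x \<le> 1 + x" using x by simp
qed

lemma hell:
  assumes "\<delta> > 0"
  shows "AE \<omega> in Q. (\<Sum>t. ennreal (indicator {\<omega> \<in> space Q. \<forall>s\<le>t. \<delta> \<le> X s \<omega>} \<omega> * ((sqrt (X (Suc t) \<omega>) - sqrt (X t \<omega>))\<^sup>2 / sqrt (X t \<omega>)))) \<noteq> \<top>"
proof -
  define Is where "Is t = {\<omega> \<in> space Q. \<forall>s\<le>t. \<delta> \<le> X s \<omega>}" for t
  define S where "S t \<omega> = sqrt (X t \<omega>)" for t \<omega>
  define D where "D t \<omega> = indicator (Is t) \<omega> * ((S (Suc t) \<omega> - S t \<omega>)\<^sup>2 / S t \<omega>)" for t \<omega>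
  define W where "W t \<omega> = indicator (Is t) \<omega> * (S t \<omega> - S (Suc t) \<omega>)" for t \<omega>
  define g where "g t \<omega> = indicator (Is t) \<omega> * (1 / S t \<omega>)" for t \<omega>
  have IsF[measurable]: "Is t \<in> sets (F t)" for t unfolding Is_def by (rule Iset_F) simp
  have IsQ[measurable]: "Is t \<in> sets Q" for t using sets_F_Q[OF IsF] .
  have [measurable]: "X t \<in> borel_measurable (F t)" for t by (rule meas_F)
  have gF: "g t \<in> borel_measurable (F t)" for t unfolding g_def S_def by measurable
  have gB: "\<bar>g t \<omega>\<bar> \<le> 1 / sqrt \<delta>" if "\<omega> \<in> space Q" for t \<omega>
  proof (cases "\<omega> \<in> Is t")
    case True
    then have "X t \<omega> \<ge> \<delta>" unfolding Is_def by auto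
    then have "sqrt (X t \<omega>) \<ge> sqrt \<delta>" by simp
    then show ?thesis using True assms unfolding g_def S_def by (simp add: frac_le)
  qed (use assms in \<open>simp add: g_def\<close>)
  have SQ[measurable]: "S t \<in> borel_measurable Q" for t unfolding S_def by measurable
  have Sint: "integrable Q (S t)" for t
    by (rule Bochner_Integration.integrable_bound[where f="\<lambda>\<omega>. 1 + X t \<omega>"])
       (auto simp: S_def nonneg intro!: AE_I2 sqrt_le_1_plus)
  have Wint: "integrable Q (W t)" for t
    unfolding W_def using Sint[of t] Sint[of "Suc t"]
    by (subst mult.commute) (intro integrable_real_mult_indicator[OF IsQ] Bochner_Integration.integrable_diff)
  have Dpt: "D t \<omega> = g t \<omega> * (X (Suc t) \<omega> - X t \<omega>) + 2 * W t \<omega>" if "\<omega> \<in> space Q" for t \<omega>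
  proof (cases "\<omega> \<in> Is t")
    case True
    then have pos: "X t \<omega> > 0" using assms unfolding Is_def by force
    have nn: "X (Suc t) \<omega> \<ge> 0" using nonneg that by auto
    have "S t \<omega> > 0" using pos unfolding S_def by simp
    moreover have "S t \<omega> * S t \<omega> = X t \<omega>" "S (Suc t) \<omega> * S (Suc t) \<omega> = X (Suc t) \<omega>"
      unfolding S_def using pos nn by auto
    ultimately show ?thesis using True unfolding D_def g_def W_def
      by (simp add: field_simps power2_eq_square)
  qed (simp add: D_def g_def W_def)
  have gint: "integrable Q (\<lambda>\<omega>. g t \<omega> * X k \<omega>)" for t k
    by (rule Bochner_Integration.integrable_bound[where f="\<lambda>\<omega>. 1 / sqrt \<delta> * X k \<omega>"])
       (use gF[THEN F_Q_meas] mult_right_mono[OF gB nonneg] assms in \<open>auto intro!: AE_I2 simp: abs_mult nonneg\<close>)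
  have Dint: "integrable Q (D t)" for t
  proof -
    have "integrable Q (\<lambda>\<omega>. g t \<omega> * X (Suc t) \<omega> - g t \<omega> * X t \<omega> + 2 * W t \<omega>)"
      using gint Wint by auto
    then show ?thesis
      by (rule Bochner_Integration.integrable_cong[THEN iffD1, rotated -1]) (auto simp: Dpt right_diff_distrib)
  qed
  have DW: "(\<integral>\<omega>. D t \<omega> \<partial>Q) = 2 * (\<integral>\<omega>. W t \<omega> \<partial>Q)" for t
  proof -
    have "(\<integral>\<omega>. D t \<omega> \<partial>Q) = (\<integral>\<omega>. g t \<omega> * X (Suc t) \<omega> - g t \<omega> * X t \<omega> + 2 * W t \<omega> \<partial>Q)"
      by (rule Bochner_Integration.integral_cong) (auto simp: Dpt right_diff_distrib)
    also have "\<dots> = (\<integral>\<omega>. g t \<omega> * X (Suc t) \<omega> \<partial>Q) - (\<integral>\<omega>. g t \<omega> * X t \<omega> \<partial>Q) + 2 * (\<integral>\<omega>. W t \<omega> \<partial>Q)"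
      using gint Wint by simp
    also have "\<dots> = 2 * (\<integral>\<omega>. W t \<omega> \<partial>Q)" using step[OF gF gB] by simp
    finally show ?thesis .
  qed
  have Dnn: "D t \<omega> \<ge> 0" for t \<omega>
  proof (cases "\<omega> \<in> Is t")
    case True
    then have "X t \<omega> \<ge> \<delta>" unfolding Is_def by auto
    then show ?thesis using assms True unfolding D_def S_def by simp
  qed (simp add: D_def)
  have Wsum: "(\<Sum>t<n. W t \<omega>) \<le> S 0 \<omega>" if "\<omega> \<in> space Q" for n \<omega>
  proof -
    have "(\<Sum>t<n. W t \<omega>) = (\<Sum>t<n. if (\<forall>u\<le>t. \<delta> \<le> X u \<omega>) then S t \<omega> - S (Suc t) \<omega> else 0)"
      using that by (intro sum.cong) (auto simp: W_def Is_def)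
    also have "\<dots> \<le> S 0 \<omega>"
    proof -
      have T: "(\<Sum>t<n. if (\<forall>u\<le>t. \<delta> \<le> X u \<omega>) then S t \<omega> - S (Suc t) \<omega> else 0) + (if (\<forall>u<n. \<delta> \<le> X u \<omega>) then S n \<omega> else 0) \<le> S 0 \<omega>"
        by (rule telescope) (simp add: S_def nonneg that)
      have "0 \<le> (if (\<forall>u<n. \<delta> \<le> X u \<omega>) then S n \<omega> else 0)" using that nonneg by (simp add: S_def)
      then show ?thesis using T by linarith
    qed
    finally show ?thesis .
  qed
  have part: "(\<Sum>t<n. (\<integral>\<omega>. D t \<omega> \<partial>Q)) \<le> 2 * (\<integral>\<omega>. S 0 \<omega> \<partial>Q)" for n
  proof -
    have "(\<Sum>t<n. (\<integral>\<omega>. D t \<omega> \<partial>Q)) = 2 * (\<Sum>t<n. (\<integral>\<omega>. W t \<omega> \<partial>Q))" by (simp add: DW sum_distrib_left)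
    also have "(\<Sum>t<n. (\<integral>\<omega>. W t \<omega> \<partial>Q)) = (\<integral>\<omega>. (\<Sum>t<n. W t \<omega>) \<partial>Q)"
      using Wint by (simp add: Bochner_Integration.integral_sum)
    also have "\<dots> \<le> (\<integral>\<omega>. S 0 \<omega> \<partial>Q)"
      by (rule integral_mono[OF Bochner_Integration.integrable_sum[OF Wint] Sint Wsum])
    finally show ?thesis by simp
  qed
  have DQ[measurable]: "D t \<in> borel_measurable Q" for t using Dint[of t] by auto
  have "(\<integral>\<^sup>+\<omega>. (\<Sum>t. ennreal (D t \<omega>)) \<partial>Q) = (\<Sum>t. (\<integral>\<^sup>+\<omega>. ennreal (D t \<omega>) \<partial>Q))"
    by (rule nn_integral_suminf) measurable
  also have "\<dots> = (\<Sum>t. ennreal (\<integral>\<omega>. D t \<omega> \<partial>Q))"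
    by (intro suminf_cong nn_integral_eq_integral Dint AE_I2 Dnn)
  also have "\<dots> \<le> ennreal (2 * (\<integral>\<omega>. S 0 \<omega> \<partial>Q))"
    unfolding suminf_eq_SUP
  proof (rule SUP_least)
    fix n
    have "(\<Sum>t<n. ennreal (\<integral>\<omega>. D t \<omega> \<partial>Q)) = ennreal (\<Sum>t<n. (\<integral>\<omega>. D t \<omega> \<partial>Q))"
      using Dnn by (intro sum_ennreal) (simp add: integral_nonneg)
    then show "(\<Sum>t<n. ennreal (\<integral>\<omega>. D t \<omega> \<partial>Q)) \<le> ennreal (2 * (\<integral>\<omega>. S 0 \<omega> \<partial>Q))"
      using part[of n] by (simp add: ennreal_leI)
  qed
  finally have "(\<integral>\<^sup>+\<omega>. (\<Sum>t. ennreal (D t \<omega>)) \<partial>Q) \<noteq> \<top>" using neq_top_trans ennreal_neq_top by blast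
  then have "AE \<omega> in Q. (\<Sum>t. ennreal (D t \<omega>)) \<noteq> \<top>"
  proof -
    have "(\<lambda>\<omega>. \<Sum>t. ennreal (D t \<omega>)) \<in> borel_measurable Q" by measurable
    then show ?thesis using nn_integral_PInf_AE[of "\<lambda>\<omega>. \<Sum>t. ennreal (D t \<omega>)" Q] \<open>_ \<noteq> \<top>\<close> by simp
  qed
  then show ?thesis unfolding D_def Is_def S_def by simp
qed


lemma liminf0:
  assumes "measure Q {\<omega> \<in> space Q. (\<Sum>t. ennreal ((ratio X (Suc t) \<omega> - 1)\<^sup>2)) = \<top>} = 1"
  shows "AE \<omega> in Q. \<forall>m::nat. \<exists>t. X t \<omega> < 1 / Suc m"
proof -
  have A1: "AE \<omega> in Q. (\<Sum>t. ennreal ((ratio X (Suc t) \<omega> - 1)\<^sup>2)) = \<top>"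
    by (rule AE_mp[OF AE_prob_1[OF assms]]) (auto intro!: AE_I2)
  have A2: "AE \<omega> in Q. \<forall>m::nat. (\<Sum>t. ennreal (indicator {\<omega> \<in> space Q. \<forall>s\<le>t. 1 / Suc m \<le> X s \<omega>} \<omega> * ((sqrt (X (Suc t) \<omega>) - sqrt (X t \<omega>))\<^sup>2 / sqrt (X t \<omega>)))) \<noteq> \<top>"
    unfolding AE_all_countable by (intro allI hell) simp
  show ?thesis using A1 A2 AE_space
  proof (eventually_elim)
    case (elim \<omega>)
    show ?case
    proof (rule ccontr)
      assume "\<not> (\<forall>m::nat. \<exists>t. X t \<omega> < 1 / Suc m)"
      then obtain m :: nat where m: "\<And>t. X t \<omega> \<ge> 1 / Suc m" by (auto simp: not_less)
      have sp: "\<omega> \<in> space Q" using elim(3) .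
      have dpos: "0 < 1 / real (Suc m)" by simp
      have "(\<Sum>t. ennreal ((sqrt (X (Suc t) \<omega>) - sqrt (X t \<omega>))\<^sup>2 / sqrt (X t \<omega>))) \<noteq> \<top>"
      proof -
        have "indicator {\<omega> \<in> space Q. \<forall>s\<le>t. 1 / real (Suc m) \<le> X s \<omega>} \<omega> = (1::real)" for t
          using sp m by (auto simp: indicator_def)
        then show ?thesis using elim(2)[rule_format, of m] by simp
      qed
      then have "(\<Sum>t. ennreal ((X (Suc t) \<omega> / X t \<omega> - 1)\<^sup>2)) \<noteq> \<top>"
        by (rule det[OF dpos m])
      moreover have "ratio X (Suc t) \<omega> = X (Suc t) \<omega> / X t \<omega>" for t
      proof -
        have "0 < 1 / real (Suc m)" by simp
        then have "X t \<omega> > 0" using m[of t] by linarith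
        then show ?thesis by (simp add: ratio_def)
      qed
      ultimately show False using elim(1) by simp
    qed
  qed
qed


lemma conv0:
  assumes L: "AE \<omega> in Q. \<forall>m::nat. \<exists>t. X t \<omega> < 1 / Suc m"
  shows "AE \<omega> in Q. (\<lambda>t. X t \<omega>) \<longlonglongrightarrow> 0"
proof -
  define E where "E m = {\<omega> \<in> space Q. \<forall>T. \<exists>k\<ge>T. X k \<omega> \<ge> 1 / real (Suc m)}" for m :: nat
  have EQ: "E m \<in> sets Q" for m unfolding E_def by measurable
  have E0: "measure Q (E m) = 0" for m
  proof -
    let ?c = "1 / real (Suc m)"
    have c: "?c > 0" by simp
    have "measure Q (E m) \<le> 0 + e" if e: "e > 0" for e
    proof -
      obtain m' where m': "inverse (real (Suc m')) < e * ?c" using reals_Archimedean[of "e * ?c"] e c by auto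
      let ?d = "1 / real (Suc m')"
      define R where "R = {\<omega> \<in> space Q. \<exists>i k. i \<le> k \<and> X i \<omega> < ?d \<and> X k \<omega> \<ge> ?c}"
      define N where "N = {\<omega> \<in> space Q. \<not> (\<exists>t. X t \<omega> < ?d)}"
      have RQ: "R \<in> sets Q" unfolding R_def by measurable
      have NQ: "N \<in> sets Q" unfolding N_def by measurable
      have "AE \<omega> in Q. \<exists>t. X t \<omega> < ?d" using L by eventually_elim auto
      then have "emeasure Q N = 0" using AE_iff_measurable[OF NQ] N_def by auto
      then have N0: "measure Q N = 0" by (simp add: emeasure_eq_measure)
      have "E m \<subseteq> R \<union> N"
      proof
        fix \<omega> assume \<omega>: "\<omega> \<in> E m"
        show "\<omega> \<in> R \<union> N"
        proof (cases "\<exists>t. X t \<omega> < ?d")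
          case True
          then obtain i where i: "X i \<omega> < ?d" by auto
          obtain k where "k \<ge> i" "X k \<omega> \<ge> ?c" using \<omega> unfolding E_def by auto
          then show ?thesis using i \<omega> unfolding R_def E_def by auto
        next
          case False then show ?thesis using \<omega> unfolding N_def E_def by auto
        qed
      qed
      then have "measure Q (E m) \<le> measure Q (R \<union> N)" using RQ NQ by (intro finite_measure_mono) auto
      also have "\<dots> \<le> measure Q R + measure Q N" using RQ NQ by (intro measure_Un_le) auto
      finally have mE: "measure Q (E m) \<le> measure Q R" using N0 by simp
      have "?c * measure Q R \<le> ?d" unfolding R_def by (rule norise_all) auto
      then have "measure Q R \<le> ?d / ?c" using c by (simp add: field_simps)
      also have "\<dots> < e" using m' c by (simp add: field_simps inverse_eq_divide)
      finally show ?thesis using mE by simp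
    qed
    then have "measure Q (E m) \<le> 0" by (rule field_le_epsilon)
    then show ?thesis by (simp add: measure_le_0_iff)
  qed
  have "AE \<omega> in Q. \<omega> \<notin> E m" for m
  proof (rule AE_not_in)
    show "E m \<in> null_sets Q" using E0[of m] EQ[of m] by (simp add: null_sets_def emeasure_eq_measure)
  qed
  then have "AE \<omega> in Q. \<forall>m. \<omega> \<notin> E m" by (simp add: AE_all_countable)
  then show ?thesis
  proof (rule AE_mp[OF _ AE_I2], intro impI)
    fix \<omega> assume sp: "\<omega> \<in> space Q" and ne: "\<forall>m. \<omega> \<notin> E m"
    show "(\<lambda>t. X t \<omega>) \<longlonglongrightarrow> 0"
      unfolding LIMSEQ_iff
    proof (intro allI impI)
      fix r :: real assume "r > 0"
      then obtain m where m: "inverse (real (Suc m)) < r" using reals_Archimedean by blast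
      have "\<exists>T. \<forall>k\<ge>T. X k \<omega> < 1 / real (Suc m)" using ne[rule_format, of m] sp unfolding E_def by (auto simp: not_le) (meson not_le)
      then obtain T where T: "\<And>k. k \<ge> T \<Longrightarrow> X k \<omega> < 1 / real (Suc m)" by blast
      show "\<exists>no. \<forall>n\<ge>no. norm (X n \<omega> - 0) < r"
      proof (intro exI allI impI)
        fix n assume "n \<ge> T"
        then show "norm (X n \<omega> - 0) < r" using T[of n] m nonneg[OF sp, of n] by (simp add: inverse_eq_divide)
      qed
    qed
  qed
qed


lemma sfs_triv: "sigma_finite_subalgebra Q (sigma (space Q) {})"
proof (rule finite_measure_subalgebra_is_sigma_finite)
  have "sigma_sets (space Q) {} \<subseteq> sets Q" by (rule sets.sigma_sets_subset) auto
  then have "subalgebra Q (sigma (space Q) {})" unfolding subalgebra_def by simp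
  then show "finite_measure_subalgebra Q (sigma (space Q) {})"
    by (simp add: finite_measure_subalgebra_def finite_measure_subalgebra_axioms_def finite_measure_axioms)
qed

lemma nn_real:
  assumes "integrable Q f" "\<And>x. x \<in> space Q \<Longrightarrow> f x \<ge> 0"
  shows "(\<integral>\<^sup>+x. ennreal (f x) \<partial>Q) = ennreal (\<integral>x. f x \<partial>Q)"
  by (rule nn_integral_eq_integral) (use assms in auto)

definition "HYP \<epsilon> \<longleftrightarrow> (\<forall>t (\<beta>::'a \<Rightarrow> real). \<beta> \<in> borel_measurable (prev_alg Q F t) \<longrightarrow>
              (\<forall>\<omega>\<in>space Q. \<beta> \<omega> > 1) \<longrightarrow>
              (AE \<omega> in Q.
                 nn_cond_exp Q (prev_alg Q F t)
                   (\<lambda>x. ennreal (ratio X t x * indicator {y. ratio X t y \<ge> \<beta> y} x)) \<omega>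
                 \<le> ennreal (\<beta> \<omega> * (1 + \<epsilon>)) *
                   nn_cond_exp Q (prev_alg Q F t)
                     (\<lambda>x. ennreal (indicator {y. ratio X t y \<ge> \<beta> y} x)) \<omega>))"

lemma over0:
  assumes hyp: "HYP \<epsilon>" and a: "a > 1" and e: "\<epsilon> > 0"
  shows "(\<integral>x. indicator {\<omega> \<in> space Q. X 0 \<omega> \<ge> a} x * X 0 x \<partial>Q) \<le> a * (1 + \<epsilon>) * measure Q {\<omega> \<in> space Q. X 0 \<omega> \<ge> a}"
proof -
  let ?G = "prev_alg Q F 0"
  let ?A = "{\<omega> \<in> space Q. X 0 \<omega> \<ge> a}"
  have AQ: "?A \<in> sets Q" by measurable
  have G: "?G = sigma (space Q) {}" by (simp add: prev_alg_def)
  have ae: "AE \<omega> in Q. nn_cond_exp Q ?G (\<lambda>x. ennreal (ratio X 0 x * indicator {y. ratio X 0 y \<ge> a} x)) \<omega>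
      \<le> ennreal (a * (1 + \<epsilon>)) * nn_cond_exp Q ?G (\<lambda>x. ennreal (indicator {y. ratio X 0 y \<ge> a} x)) \<omega>"
    using hyp[unfolded HYP_def, rule_format, of "\<lambda>_. a" 0] a by simp
  have r0: "ratio X 0 x = X 0 x" for x by (simp add: ratio_def)
  have "(\<integral>\<^sup>+\<omega>. (\<lambda>_. 1) \<omega> * ennreal (ratio X 0 \<omega> * indicator {y. ratio X 0 y \<ge> a} \<omega>) \<partial>Q)
     \<le> (\<integral>\<^sup>+\<omega>. ((\<lambda>_. 1) \<omega> * (\<lambda>_. ennreal (a * (1 + \<epsilon>))) \<omega>) * ennreal (indicator {y. ratio X 0 y \<ge> a} \<omega>) \<partial>Q)"
    by (rule key_ineq[OF _ ae]) (simp_all add: G sfs_triv r0)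
  moreover have "(\<integral>\<^sup>+\<omega>. (\<lambda>_. 1) \<omega> * ennreal (ratio X 0 \<omega> * indicator {y. ratio X 0 y \<ge> a} \<omega>) \<partial>Q)
      = ennreal (\<integral>x. indicator ?A x * X 0 x \<partial>Q)"
  proof -
    have "(\<integral>\<^sup>+\<omega>. (\<lambda>_. 1) \<omega> * ennreal (ratio X 0 \<omega> * indicator {y. ratio X 0 y \<ge> a} \<omega>) \<partial>Q)
        = (\<integral>\<^sup>+\<omega>. ennreal (indicator ?A \<omega> * X 0 \<omega>) \<partial>Q)"
      by (rule nn_integral_cong) (auto simp: r0 indicator_def)
    also have "\<dots> = ennreal (\<integral>x. indicator ?A x * X 0 x \<partial>Q)"
      by (rule nn_real) (use AQ in \<open>auto simp: nonneg\<close>)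
    finally show ?thesis .
  qed
  moreover have "(\<integral>\<^sup>+\<omega>. ((\<lambda>_. 1) \<omega> * (\<lambda>_. ennreal (a * (1 + \<epsilon>))) \<omega>) * ennreal (indicator {y. ratio X 0 y \<ge> a} \<omega>) \<partial>Q)
      = ennreal (a * (1 + \<epsilon>) * measure Q ?A)"
  proof -
    have "(\<integral>\<^sup>+\<omega>. ((\<lambda>_. 1) \<omega> * (\<lambda>_. ennreal (a * (1 + \<epsilon>))) \<omega>) * ennreal (indicator {y. ratio X 0 y \<ge> a} \<omega>) \<partial>Q)
        = (\<integral>\<^sup>+\<omega>. ennreal (a * (1 + \<epsilon>) * indicator ?A \<omega>) \<partial>Q)"
      by (rule nn_integral_cong) (auto simp: r0 indicator_def)
    also have "\<dots> = ennreal (\<integral>x. a * (1 + \<epsilon>) * indicator ?A x \<partial>Q)"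
      by (rule nn_real[OF int_cind[OF AQ]]) (use a e in \<open>auto simp: nonneg\<close>)
    also have "\<dots> = ennreal (a * (1 + \<epsilon>) * measure Q ?A)" using AQ by simp
    finally show ?thesis .
  qed
  ultimately show ?thesis using a e by (simp add: ennreal_le_iff)
qed



end

context nnmart begin
lemma overS:
  fixes n :: nat and a \<epsilon> :: real
  assumes hyp: "HYP \<epsilon>" and a: "a > 1" and e: "\<epsilon> > 0"
  defines "T \<equiv> {\<omega> \<in> space Q. \<forall>s\<le>n. X s \<omega> < a} \<inter> {\<omega> \<in> space Q. X (Suc n) \<omega> \<ge> a}"
  shows "(\<integral>x. indicator T x * X (Suc n) x \<partial>Q) \<le> a * (1 + \<epsilon>) * measure Q T"
proof -
  define R' where "R' = {\<omega> \<in> space Q. \<forall>s\<le>n. X s \<omega> < a} \<inter> {\<omega> \<in> space Q. 0 < X n \<omega>}"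
  define T' where "T' = R' \<inter> {\<omega> \<in> space Q. X (Suc n) \<omega> \<ge> a}"
  define Z where "Z = {\<omega> \<in> space Q. X n \<omega> \<le> 0}"
  define \<beta> where "\<beta> \<omega> = (if \<omega> \<in> R' then a / X n \<omega> else 2)" for \<omega>
  have p1: "Measurable.pred borel (\<lambda>x::real. x < a)" "Measurable.pred borel (\<lambda>x::real. 0 < x)"
    "Measurable.pred borel (\<lambda>x::real. x \<le> 0)" by simp_all
  have RF[measurable]: "R' \<in> sets (F n)" unfolding R'_def
    by (rule sets.Int[OF Iset_F[OF p1(1)] setF[OF p1(2)]])
  have ZF: "Z \<in> sets (F n)" unfolding Z_def by (rule setF[OF p1(3)])
  have [measurable]: "X n \<in> borel_measurable (F n)" by (rule meas_F)
  have RQ: "R' \<in> sets Q" using sets_F_Q[OF RF] .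
  have ZQ: "Z \<in> sets Q" using sets_F_Q[OF ZF] .
  have T'Q: "T' \<in> sets Q" unfolding T'_def by (rule setQ[OF RQ]) simp
  have TQ: "T \<in> sets Q" unfolding T_def by (rule setQ[OF sets_F_Q[OF Iset_F[OF p1(1)]]]) simp
  have G: "prev_alg Q F (Suc n) = F n" by (simp add: prev_alg_def)
  have RS: "R' \<inter> space Q = R'" unfolding R'_def by blast
  have \<beta>F[measurable]: "\<beta> \<in> borel_measurable (F n)" unfolding \<beta>_def[abs_def]
    by (intro measurable_If_set borel_measurable_divide measurable_const meas_F)
       (simp_all add: RS RF)
  have \<beta>1: "\<forall>\<omega>\<in>space Q. \<beta> \<omega> > 1"
  proof
    fix \<omega> assume "\<omega> \<in> space Q"
    show "\<beta> \<omega> > 1"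
    proof (cases "\<omega> \<in> R'")
      case True
      then have "X n \<omega> < a" "X n \<omega> > 0" unfolding R'_def by auto
      then show ?thesis using True by (simp add: \<beta>_def)
    qed (simp add: \<beta>_def)
  qed
  have ae: "AE \<omega> in Q. nn_cond_exp Q (F n) (\<lambda>x. ennreal (ratio X (Suc n) x * indicator {y. ratio X (Suc n) y \<ge> \<beta> y} x)) \<omega>
      \<le> ennreal (\<beta> \<omega> * (1 + \<epsilon>)) * nn_cond_exp Q (F n) (\<lambda>x. ennreal (indicator {y. ratio X (Suc n) y \<ge> \<beta> y} x)) \<omega>"
    using hyp[unfolded HYP_def, rule_format, of \<beta> "Suc n"] \<beta>1 \<beta>F G by simp
  have ratQ[measurable]: "ratio X (Suc n) \<in> borel_measurable Q" unfolding ratio_def[abs_def] by simp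
  have \<beta>Q[measurable]: "\<beta> \<in> borel_measurable Q" using F_Q_meas[OF \<beta>F] .
  have "(\<integral>\<^sup>+\<omega>. ennreal (indicator R' \<omega> * X n \<omega>) * ennreal (ratio X (Suc n) \<omega> * indicator {y. ratio X (Suc n) y \<ge> \<beta> y} \<omega>) \<partial>Q)
     \<le> (\<integral>\<^sup>+\<omega>. (ennreal (indicator R' \<omega> * X n \<omega>) * ennreal (\<beta> \<omega> * (1 + \<epsilon>))) * ennreal (indicator {y. ratio X (Suc n) y \<ge> \<beta> y} \<omega>) \<partial>Q)"
    by (rule key_ineq[OF sfs ae]) measurable
  moreover have "(\<integral>\<^sup>+\<omega>. ennreal (indicator R' \<omega> * X n \<omega>) * ennreal (ratio X (Suc n) \<omega> * indicator {y. ratio X (Suc n) y \<ge> \<beta> y} \<omega>) \<partial>Q)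
      = ennreal (\<integral>x. indicator T' x * X (Suc n) x \<partial>Q)"
  proof -
    have "(\<integral>\<^sup>+\<omega>. ennreal (indicator R' \<omega> * X n \<omega>) * ennreal (ratio X (Suc n) \<omega> * indicator {y. ratio X (Suc n) y \<ge> \<beta> y} \<omega>) \<partial>Q)
        = (\<integral>\<^sup>+\<omega>. ennreal (indicator T' \<omega> * X (Suc n) \<omega>) \<partial>Q)"
    proof (rule nn_integral_cong)
      fix \<omega> assume sp: "\<omega> \<in> space Q"
      show "ennreal (indicator R' \<omega> * X n \<omega>) * ennreal (ratio X (Suc n) \<omega> * indicator {y. ratio X (Suc n) y \<ge> \<beta> y} \<omega>)
          = ennreal (indicator T' \<omega> * X (Suc n) \<omega>)"
      proof (cases "\<omega> \<in> R'")
        case True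
        then have p: "X n \<omega> > 0" unfolding R'_def by auto
        have r: "ratio X (Suc n) \<omega> = X (Suc n) \<omega> / X n \<omega>" using p by (simp add: ratio_def)
        have b: "\<beta> \<omega> = a / X n \<omega>" using True by (simp add: \<beta>_def)
        have iff: "(ratio X (Suc n) \<omega> \<ge> \<beta> \<omega>) = (X (Suc n) \<omega> \<ge> a)" using p r b by (simp add: divide_le_cancel)
        have "ennreal (indicator R' \<omega> * X n \<omega>) * ennreal (ratio X (Suc n) \<omega> * indicator {y. ratio X (Suc n) y \<ge> \<beta> y} \<omega>)
            = ennreal (X n \<omega> * (ratio X (Suc n) \<omega> * indicator {y. ratio X (Suc n) y \<ge> \<beta> y} \<omega>))"
          using True p by (simp add: ennreal_mult')
        also have "\<dots> = ennreal (indicator T' \<omega> * X (Suc n) \<omega>)"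
        proof -
          have i1: "indicator {y. \<beta> y \<le> ratio X (Suc n) y} \<omega> = (indicator T' \<omega> :: real)"
            using iff True sp unfolding T'_def by (simp add: indicator_def)
          show ?thesis using p r i1 by (simp add: mult.commute)
        qed
        finally show ?thesis .
      next
        case False then show ?thesis unfolding T'_def by simp
      qed
    qed
    also have "\<dots> = ennreal (\<integral>x. indicator T' x * X (Suc n) x \<partial>Q)"
      by (rule nn_real[OF int_ind[OF T'Q]]) (auto simp: nonneg)
    finally show ?thesis .
  qed
  moreover have "(\<integral>\<^sup>+\<omega>. (ennreal (indicator R' \<omega> * X n \<omega>) * ennreal (\<beta> \<omega> * (1 + \<epsilon>))) * ennreal (indicator {y. ratio X (Suc n) y \<ge> \<beta> y} \<omega>) \<partial>Q)
      = ennreal (a * (1 + \<epsilon>) * measure Q T')"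
  proof -
    have "(\<integral>\<^sup>+\<omega>. (ennreal (indicator R' \<omega> * X n \<omega>) * ennreal (\<beta> \<omega> * (1 + \<epsilon>))) * ennreal (indicator {y. ratio X (Suc n) y \<ge> \<beta> y} \<omega>) \<partial>Q)
        = (\<integral>\<^sup>+\<omega>. ennreal (a * (1 + \<epsilon>) * indicator T' \<omega>) \<partial>Q)"
    proof (rule nn_integral_cong)
      fix \<omega> assume sp: "\<omega> \<in> space Q"
      show "(ennreal (indicator R' \<omega> * X n \<omega>) * ennreal (\<beta> \<omega> * (1 + \<epsilon>))) * ennreal (indicator {y. ratio X (Suc n) y \<ge> \<beta> y} \<omega>)
          = ennreal (a * (1 + \<epsilon>) * indicator T' \<omega>)"
      proof (cases "\<omega> \<in> R'")
        case True
        then have p: "X n \<omega> > 0" unfolding R'_def by auto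
        have r: "ratio X (Suc n) \<omega> = X (Suc n) \<omega> / X n \<omega>" using p by (simp add: ratio_def)
        have b: "\<beta> \<omega> = a / X n \<omega>" using True by (simp add: \<beta>_def)
        have iff: "(ratio X (Suc n) \<omega> \<ge> \<beta> \<omega>) = (X (Suc n) \<omega> \<ge> a)" using p r b by (simp add: divide_le_cancel)
        have xb: "X n \<omega> * (\<beta> \<omega> * (1 + \<epsilon>)) = a * (1 + \<epsilon>)" using p b by simp
        have "(ennreal (indicator R' \<omega> * X n \<omega>) * ennreal (\<beta> \<omega> * (1 + \<epsilon>))) * ennreal (indicator {y. ratio X (Suc n) y \<ge> \<beta> y} \<omega>)
            = ennreal (a * (1 + \<epsilon>)) * ennreal (indicator {y. ratio X (Suc n) y \<ge> \<beta> y} \<omega>)"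
          using True p xb ennreal_mult'[of "X n \<omega>" "\<beta> \<omega> * (1 + \<epsilon>)"] by (simp only: indicator_simps mult_1)
        also have "\<dots> = ennreal (a * (1 + \<epsilon>) * indicator T' \<omega>)"
        proof -
          have i1: "indicator {y. \<beta> y \<le> ratio X (Suc n) y} \<omega> = (indicator T' \<omega> :: real)"
            using iff True sp unfolding T'_def by (simp add: indicator_def)
          show ?thesis using i1 a e by (simp add: ennreal_mult'[symmetric])
        qed
        finally show ?thesis .
      next
        case False then show ?thesis unfolding T'_def by simp
      qed
    qed
    also have "\<dots> = ennreal (\<integral>x. a * (1 + \<epsilon>) * indicator T' x \<partial>Q)"
      by (rule nn_real[OF int_cind[OF T'Q]]) (use a e in auto)
    also have "\<dots> = ennreal (a * (1 + \<epsilon>) * measure Q T')" using T'Q by simp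
    finally show ?thesis .
  qed
  ultimately have I1: "(\<integral>x. indicator T' x * X (Suc n) x \<partial>Q) \<le> a * (1 + \<epsilon>) * measure Q T'"
    using a e by (simp add: ennreal_le_iff)
  have I2: "(\<integral>x. indicator Z x * X (Suc n) x \<partial>Q) \<le> 0"
  proof -
    have "(\<integral>x. indicator Z x * X (Suc n) x \<partial>Q) = (\<integral>x. indicator Z x * X n x \<partial>Q)"
      using step_set[of n "Suc n" Z] ZF by simp
    also have "\<dots> \<le> (\<integral>x. 0 \<partial>Q)"
      by (rule integral_mono[OF int_ind[OF ZQ]]) (auto simp: Z_def indicator_def)
    finally show ?thesis by simp
  qed
  have "(\<integral>x. indicator T x * X (Suc n) x \<partial>Q) \<le> (\<integral>x. indicator T' x * X (Suc n) x + indicator Z x * X (Suc n) x \<partial>Q)"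
    by (rule integral_mono[OF int_ind[OF TQ] Bochner_Integration.integrable_add[OF int_ind[OF T'Q] int_ind[OF ZQ]]]) (auto simp: T_def T'_def R'_def Z_def indicator_def nonneg not_less)
  also have "\<dots> = (\<integral>x. indicator T' x * X (Suc n) x \<partial>Q) + (\<integral>x. indicator Z x * X (Suc n) x \<partial>Q)"
    by (rule Bochner_Integration.integral_add) (use T'Q ZQ in auto)
  also have "\<dots> \<le> a * (1 + \<epsilon>) * measure Q T'" using I1 I2 by simp
  also have "\<dots> \<le> a * (1 + \<epsilon>) * measure Q T"
  proof -
    have "T' \<subseteq> T" unfolding T'_def T_def R'_def by auto
    then have "measure Q T' \<le> measure Q T" using TQ by (intro finite_measure_mono)
    then show ?thesis using a e by (intro mult_left_mono) auto
  qed
  finally show ?thesis .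
qed


lemma lower_a:
  assumes hyp: "HYP \<epsilon>" and a: "a > 1" and e: "\<epsilon> > 0" and E1: "expectation (X 0) = 1"
    and conv: "AE \<omega> in Q. (\<lambda>t. X t \<omega>) \<longlonglongrightarrow> 0"
  shows "1 \<le> a * (1 + \<epsilon>) * measure Q {\<omega> \<in> space Q. \<exists>k. X k \<omega> \<ge> a}"
proof -
  define R where "R n = {\<omega> \<in> space Q. \<forall>s\<le>n. X s \<omega> < a}" for n
  define B where "B = {\<omega> \<in> space Q. \<exists>k. X k \<omega> \<ge> a}"
  have pl: "Measurable.pred borel (\<lambda>x::real. x < a)" by simp
  have RF: "R n \<in> sets (F n)" for n unfolding R_def by (rule Iset_F[OF pl])
  have RQ: "R n \<in> sets Q" for n using sets_F_Q[OF RF] .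
  have BQ: "B \<in> sets Q" unfolding B_def by measurable
  let ?K = "a * (1 + \<epsilon>)"
  have K0: "?K \<ge> 0" using a e by simp
  have P: "1 \<le> (\<integral>x. indicator (R n) x * X n x \<partial>Q) + ?K * measure Q (space Q - R n)" for n
  proof (induction n)
    case 0
    define T0 where "T0 = {\<omega> \<in> space Q. X 0 \<omega> \<ge> a}"
    have T0Q: "T0 \<in> sets Q" unfolding T0_def by measurable
    have sT: "space Q - R 0 = T0" unfolding R_def T0_def by auto
    have "1 = (\<integral>x. X 0 x \<partial>Q)" using E1 by simp
    also have "\<dots> = (\<integral>x. indicator (R 0) x * X 0 x + indicator T0 x * X 0 x \<partial>Q)"
      by (rule Bochner_Integration.integral_cong) (auto simp: R_def T0_def indicator_def)
    also have "\<dots> = (\<integral>x. indicator (R 0) x * X 0 x \<partial>Q) + (\<integral>x. indicator T0 x * X 0 x \<partial>Q)"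
      by (rule Bochner_Integration.integral_add[OF int_ind[OF RQ] int_ind[OF T0Q]])
    also have "\<dots> \<le> (\<integral>x. indicator (R 0) x * X 0 x \<partial>Q) + ?K * measure Q T0"
      using over0[OF hyp a e] unfolding T0_def by simp
    finally show ?case using sT by simp
  next
    case (Suc n)
    define T where "T = {\<omega> \<in> space Q. \<forall>s\<le>n. X s \<omega> < a} \<inter> {\<omega> \<in> space Q. X (Suc n) \<omega> \<ge> a}"
    have TQ: "T \<in> sets Q" unfolding T_def by (rule setQ[OF RQ[of n, unfolded R_def]]) simp
    have "(\<integral>x. indicator (R n) x * X n x \<partial>Q) = (\<integral>x. indicator (R n) x * X (Suc n) x \<partial>Q)"
      using step_set[of n "Suc n" "R n"] RF by simp
    also have "\<dots> = (\<integral>x. indicator (R (Suc n)) x * X (Suc n) x + indicator T x * X (Suc n) x \<partial>Q)"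
      by (rule Bochner_Integration.integral_cong) (auto simp: R_def T_def indicator_def le_Suc_eq not_less)
    also have "\<dots> = (\<integral>x. indicator (R (Suc n)) x * X (Suc n) x \<partial>Q) + (\<integral>x. indicator T x * X (Suc n) x \<partial>Q)"
      by (rule Bochner_Integration.integral_add[OF int_ind[OF RQ] int_ind[OF TQ]])
    also have "\<dots> \<le> (\<integral>x. indicator (R (Suc n)) x * X (Suc n) x \<partial>Q) + ?K * measure Q T"
      using overS[OF hyp a e, of n] unfolding T_def by simp
    finally have i: "(\<integral>x. indicator (R n) x * X n x \<partial>Q) \<le> (\<integral>x. indicator (R (Suc n)) x * X (Suc n) x \<partial>Q) + ?K * measure Q T" .
    have "space Q - R (Suc n) = (space Q - R n) \<union> T" unfolding R_def T_def by (auto simp: le_Suc_eq not_less)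
    then have "measure Q (space Q - R (Suc n)) = measure Q (space Q - R n) + measure Q T"
      using finite_measure_Union[of "space Q - R n" T] RQ TQ unfolding R_def T_def by auto
    then show ?case using Suc.IH i K0 by (simp add: distrib_left)
  qed
  have lim: "(\<lambda>n. (\<integral>x. indicator (R n) x * X n x \<partial>Q)) \<longlonglongrightarrow> (\<integral>x. 0 \<partial>Q)"
  proof (rule integral_dominated_convergence[where w="\<lambda>_. a"])
    show "(\<lambda>x. 0::real) \<in> borel_measurable Q" by simp
    show "(\<lambda>x. indicator (R n) x * X n x) \<in> borel_measurable Q" for n using int_ind[OF RQ, of n n] by auto
    show "integrable Q (\<lambda>_. a)" by simp
    show "AE x in Q. (\<lambda>n. indicator (R n) x * X n x) \<longlonglongrightarrow> 0"
      using conv AE_space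
    proof eventually_elim
      case (elim x)
      show ?case
      proof (rule tendsto_sandwich[OF _ _ tendsto_const elim(1)])
        show "\<forall>\<^sub>F n in sequentially. 0 \<le> indicator (R n) x * X n x" using nonneg[OF elim(2)] by simp
        show "\<forall>\<^sub>F n in sequentially. indicator (R n) x * X n x \<le> X n x" using nonneg[OF elim(2)] by (simp add: indicator_def)
      qed
    qed
    show "AE x in Q. norm (indicator (R n) x * X n x) \<le> a" for n
      using nonneg a by (auto intro!: AE_I2 simp: R_def indicator_def)
  qed
  have "1 \<le> (\<integral>x. 0 \<partial>Q) + ?K * measure Q B"
  proof (rule LIMSEQ_le_const[OF tendsto_add[OF lim tendsto_const]])
    show "\<exists>N. \<forall>n\<ge>N. 1 \<le> (\<integral>x. indicator (R n) x * X n x \<partial>Q) + ?K * measure Q B"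
    proof (intro exI allI impI)
      fix n
      have "space Q - R n \<subseteq> B" unfolding R_def B_def by (auto simp: not_less)
      then have "measure Q (space Q - R n) \<le> measure Q B" using BQ by (intro finite_measure_mono)
      then show "1 \<le> (\<integral>x. indicator (R n) x * X n x \<partial>Q) + ?K * measure Q B"
        using P[of n] mult_left_mono[OF _ K0] by (smt (verit))
    qed
  qed
  then show ?thesis unfolding B_def by simp
qed


lemma upper:
  assumes "0 < \<alpha>" "\<alpha> \<le> 1" "expectation (X 0) = 1"
  shows "measure Q {\<omega> \<in> space Q. (SUP t. ereal (X t \<omega>)) \<ge> ereal (1 / \<alpha>)} \<le> \<alpha>"
proof (rule field_le_mult_one_interval)
  fix r :: real assume r: "0 < r" "r < 1"
  let ?S = "{\<omega> \<in> space Q. (SUP t. ereal (X t \<omega>)) \<ge> ereal (1 / \<alpha>)}"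
  let ?c = "r / \<alpha>"
  have c: "?c > 0" using r assms by simp
  have sub: "?S \<subseteq> {\<omega> \<in> space Q. \<exists>k. X k \<omega> \<ge> ?c}"
  proof
    fix \<omega> assume \<omega>: "\<omega> \<in> ?S"
    have "ereal ?c < ereal (1 / \<alpha>)" using r assms by (simp add: divide_strict_right_mono)
    also have "\<dots> \<le> (SUP t. ereal (X t \<omega>))" using \<omega> by simp
    finally obtain k where "ereal ?c < ereal (X k \<omega>)" by (auto simp: less_SUP_iff)
    then show "\<omega> \<in> {\<omega> \<in> space Q. \<exists>k. X k \<omega> \<ge> ?c}" using \<omega> by (auto intro!: exI[of _ k])
  qed
  have mS: "{\<omega> \<in> space Q. \<exists>k. X k \<omega> \<ge> ?c} \<in> sets Q"
  proof -
    have "{\<omega> \<in> space Q. \<exists>k. X k \<omega> \<ge> ?c} = (\<Union>k. {\<omega> \<in> space Q. ?c \<le> X k \<omega>})" by auto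
    moreover have "{\<omega> \<in> space Q. ?c \<le> X k \<omega>} \<in> sets Q" for k
      using sets_F_Q[OF setF[of "\<lambda>x. ?c \<le> x" k]] by simp
    ultimately show ?thesis by (auto intro!: sets.countable_UN)
  qed
  have "?c * measure Q ?S \<le> ?c * measure Q {\<omega> \<in> space Q. \<exists>k. X k \<omega> \<ge> ?c}"
    by (rule mult_left_mono[OF finite_measure_mono[OF sub mS]]) (use c in simp)
  also have "\<dots> \<le> 1" by (rule ville_all[OF c assms(3)])
  finally have "?c * measure Q ?S \<le> 1" .
  then show "r * measure Q ?S \<le> \<alpha>" using assms by (simp add: field_simps)
qed

lemma lower:
  assumes hyp: "HYP \<epsilon>" and e: "\<epsilon> > 0" and "0 < \<alpha>" "\<alpha> \<le> 1" and E1: "expectation (X 0) = 1"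
    and conv: "AE \<omega> in Q. (\<lambda>t. X t \<omega>) \<longlonglongrightarrow> 0"
  shows "measure Q {\<omega> \<in> space Q. (SUP t. ereal (X t \<omega>)) \<ge> ereal (1 / \<alpha>)} \<ge> \<alpha> / (1 + \<epsilon>)"
proof (rule field_le_mult_one_interval)
  fix r :: real assume r: "0 < r" "r < 1"
  let ?S = "{\<omega> \<in> space Q. (SUP t. ereal (X t \<omega>)) \<ge> ereal (1 / \<alpha>)}"
  let ?a = "1 / (r * \<alpha>)"
  have ra: "r * \<alpha> < 1"
  proof -
    have "r * \<alpha> < 1 * \<alpha>" using r assms by (intro mult_strict_right_mono) auto
    then have "r * \<alpha> < \<alpha>" by (simp only: mult_1)
    then show ?thesis using assms(4) by linarith
  qed
  have ra0: "r * \<alpha> > 0" using r assms by simp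
  have a1: "?a > 1" using ra ra0 by (simp add: field_simps)
  have a0: "?a > 0" using ra0 by simp
  have sub: "{\<omega> \<in> space Q. \<exists>k. X k \<omega> \<ge> ?a} \<subseteq> ?S"
  proof
    fix \<omega> assume \<omega>: "\<omega> \<in> {\<omega> \<in> space Q. \<exists>k. X k \<omega> \<ge> ?a}"
    then obtain k where k: "X k \<omega> \<ge> ?a" "\<omega> \<in> space Q" by auto
    have "1 / \<alpha> \<le> ?a" using r assms by (simp add: field_simps)
    then have "ereal (1 / \<alpha>) \<le> ereal (X k \<omega>)" using k by simp
    also have "\<dots> \<le> (SUP t. ereal (X t \<omega>))" by (rule SUP_upper) simp
    finally show "\<omega> \<in> ?S" using k by simp
  qed
  have mf: "(\<lambda>\<omega>. SUP t. ereal (X t \<omega>)) \<in> borel_measurable Q"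
    by (rule borel_measurable_SUP) (auto intro: borel_measurable_ereal)
  have "?S = (\<lambda>\<omega>. SUP t. ereal (X t \<omega>)) -` {ereal (1 / \<alpha>)..} \<inter> space Q" by auto
  then have mS: "?S \<in> sets Q" using measurable_sets[OF mf atLeast_borel] by simp
  have "1 \<le> ?a * (1 + \<epsilon>) * measure Q {\<omega> \<in> space Q. \<exists>k. X k \<omega> \<ge> ?a}"
    by (rule lower_a[OF hyp a1 e E1 conv])
  also have "\<dots> \<le> ?a * (1 + \<epsilon>) * measure Q ?S"
    using finite_measure_mono[OF sub mS] a0 e by (intro mult_left_mono) auto
  finally have "1 \<le> ?a * (1 + \<epsilon>) * measure Q ?S" .
  then show "r * (\<alpha> / (1 + \<epsilon>)) \<le> measure Q ?S" using r assms e by (simp add: field_simps)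
qed

end

theorem lemma4:
  fixes Q :: "'a measure" and F :: "nat \<Rightarrow> 'a measure" and X :: "nat \<Rightarrow> 'a \<Rightarrow> real"
  assumes "prob_space Q"
    and "is_filtration Q F"
    and "is_martingale Q F X"
    and "\<And>t \<omega>. \<omega> \<in> space Q \<Longrightarrow> X t \<omega> \<ge> 0"
    and "prob_space.expectation Q (X 0) = 1"
    and "measure Q {\<omega> \<in> space Q. (\<Sum>t. ennreal ((ratio X (Suc t) \<omega> - 1)\<^sup>2)) = \<top>} = 1"
  shows "(AE \<omega> in Q. (\<lambda>t. X t \<omega>) \<longlonglongrightarrow> 0)
    \<and> (\<forall>\<epsilon>::real. \<epsilon> > 0 \<longrightarrow>
         (\<forall>t (\<beta>::'a \<Rightarrow> real). \<beta> \<in> borel_measurable (prev_alg Q F t) \<longrightarrow>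
              (\<forall>\<omega>\<in>space Q. \<beta> \<omega> > 1) \<longrightarrow>
              (AE \<omega> in Q.
                 nn_cond_exp Q (prev_alg Q F t)
                   (\<lambda>x. ennreal (ratio X t x * indicator {y. ratio X t y \<ge> \<beta> y} x)) \<omega>
                 \<le> ennreal (\<beta> \<omega> * (1 + \<epsilon>)) *
                   nn_cond_exp Q (prev_alg Q F t)
                     (\<lambda>x. ennreal (indicator {y. ratio X t y \<ge> \<beta> y} x)) \<omega>)) \<longrightarrow>
         (\<forall>\<alpha>::real. 0 < \<alpha> \<and> \<alpha> \<le> 1 \<longrightarrow>
              \<alpha> \<ge> measure Q {\<omega> \<in> space Q. (SUP t. ereal (X t \<omega>)) \<ge> ereal (1 / \<alpha>)}
            \<and> measure Q {\<omega> \<in> space Q. (SUP t. ereal (X t \<omega>)) \<ge> ereal (1 / \<alpha>)} \<ge> \<alpha> / (1 + \<epsilon>)))"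
proof -
  interpret nnmart Q F X
    using assms(1-4) by (simp add: nnmart_def nnmart_axioms_def)
  have conv: "AE \<omega> in Q. (\<lambda>t. X t \<omega>) \<longlonglongrightarrow> 0" by (rule conv0[OF liminf0[OF assms(6)]])
  show ?thesis
  proof (intro conjI allI impI)
    show "AE \<omega> in Q. (\<lambda>t. X t \<omega>) \<longlonglongrightarrow> 0" by (rule conv)
  next
    fix \<epsilon> :: real and \<alpha> :: real
    assume e: "\<epsilon> > 0" and h: "\<forall>t (\<beta>::'a \<Rightarrow> real). \<beta> \<in> borel_measurable (prev_alg Q F t) \<longrightarrow>
              (\<forall>\<omega>\<in>space Q. \<beta> \<omega> > 1) \<longrightarrow>
              (AE \<omega> in Q.
                 nn_cond_exp Q (prev_alg Q F t)
                   (\<lambda>x. ennreal (ratio X t x * indicator {y. ratio X t y \<ge> \<beta> y} x)) \<omega>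
                 \<le> ennreal (\<beta> \<omega> * (1 + \<epsilon>)) *
                   nn_cond_exp Q (prev_alg Q F t)
                     (\<lambda>x. ennreal (indicator {y. ratio X t y \<ge> \<beta> y} x)) \<omega>)"
      and al: "0 < \<alpha> \<and> \<alpha> \<le> 1"
    have hyp: "HYP \<epsilon>" unfolding HYP_def using h .
    show "\<alpha> \<ge> measure Q {\<omega> \<in> space Q. (SUP t. ereal (X t \<omega>)) \<ge> ereal (1 / \<alpha>)}"
      using upper[of \<alpha>] al assms(5) by simp
    show "measure Q {\<omega> \<in> space Q. (SUP t. ereal (X t \<omega>)) \<ge> ereal (1 / \<alpha>)} \<ge> \<alpha> / (1 + \<epsilon>)"
      using lower[OF hyp e _ _ assms(5) conv] al by simp
  qed
qed

end
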